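(* Let $G$ be a finite simple graph and let $\{G_1,\dots,G_b\}$ be an edge decomposition of $G$ (i.e. $G_1,\dots,G_b$ are subgraphs of $G$ whose edge sets partition $E(G)$). Suppose that for each $i=1,\dots,b$, the simple graph $G_i$ has a triangle decomposition, and that $\Delta_0(G_i)\neq\emptyset$. Then $\Delta_0(G)\neq\emptyset$; that is, some multigraph in $\Gamma_0(G)$ has a triangle decomposition.
   Context: For a finite simple graph $G$ and a nonnegative integer $a$, $\Gamma_a(G)$ denotes the set of all multigraphs on the vertex set of $G$ obtained by assigning to the edges of $G$ the multiplicities $a,a+1,\dots,a+|E(G)|-1$, bijectively (each multiplicity used on exactly one edge; an edge with multiplicity $0$ is absent). A triangle decomposition of a (multi)graph is a partition of its edge multiset into triangles (copies of $K_3$). $\Delta_a(G)$ denotes the set of multigraphs in $\Gamma_a(G)$ that admit a triangle decomposition. *)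

theory Defs
  imports Main "HOL-Library.Multiset"
begin

definition simple_graph :: "'a set \<Rightarrow> 'a set set \<Rightarrow> bool" where
  "simple_graph V E \<longleftrightarrow> finite V \<and> (\<forall>e\<in>E. e \<subseteq> V \<and> card e = 2)"

definition subgraph :: "'a set \<Rightarrow> 'a set set \<Rightarrow> 'a set \<Rightarrow> 'a set set \<Rightarrow> bool" where
  "subgraph V' E' V E \<longleftrightarrow> simple_graph V' E' \<and> V' \<subseteq> V \<and> E' \<subseteq> E"

text \<open>A multigraph on V is given by an edge multiplicity function on 2-subsets
(multiplicity 0 = absent edge).\<close>
definition Gamma :: "nat \<Rightarrow> 'a set \<Rightarrow> 'a set set \<Rightarrow> ('a set \<Rightarrow> nat) set" where
  "Gamma a V E = {m. \<exists>f. bij_betw f E {a..<a + card E} \<and>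
                        (\<forall>e. m e = (if e \<in> E then f e else 0))}"

definition triangle_decomposable :: "('a set \<Rightarrow> nat) \<Rightarrow> bool" where
  "triangle_decomposable m \<longleftrightarrow>
     (\<exists>T :: 'a set multiset. (\<forall>t\<in>#T. card t = 3) \<and>
        (\<forall>e. card e = 2 \<longrightarrow> m e = size (filter_mset (\<lambda>t. e \<subseteq> t) T)))"

definition Delta :: "nat \<Rightarrow> 'a set \<Rightarrow> 'a set set \<Rightarrow> ('a set \<Rightarrow> nat) set" where
  "Delta a V E = {m \<in> Gamma a V E. triangle_decomposable m}"

definition graph_triangle_decomposable :: "'a set set \<Rightarrow> bool" where
  "graph_triangle_decomposable E \<longleftrightarrow> triangle_decomposable (\<lambda>e. if e \<in> E then 1 else 0)"

end

theory Submission
  imports Defs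
begin

lemma td_add:
  assumes "triangle_decomposable m1" "triangle_decomposable m2"
  shows "triangle_decomposable (\<lambda>e. m1 e + m2 e)"
proof -
  obtain T1 :: "'a set multiset" where T1: "\<forall>t\<in>#T1. card t = 3"
    "\<forall>e. card e = 2 \<longrightarrow> m1 e = size (filter_mset (\<lambda>t. e \<subseteq> t) T1)"
    using assms(1) unfolding triangle_decomposable_def by blast
  obtain T2 :: "'a set multiset" where T2: "\<forall>t\<in>#T2. card t = 3"
    "\<forall>e. card e = 2 \<longrightarrow> m2 e = size (filter_mset (\<lambda>t. e \<subseteq> t) T2)"
    using assms(2) unfolding triangle_decomposable_def by blast
  show ?thesis unfolding triangle_decomposable_def
    by (rule exI[of _ "T1 + T2"]) (use T1 T2 in auto)
qed

lemma td_zero: "triangle_decomposable (\<lambda>e. 0)"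
  unfolding triangle_decomposable_def by (rule exI[of _ "{#}"]) auto

lemma td_mult:
  assumes "triangle_decomposable m"
  shows "triangle_decomposable (\<lambda>e. k * m e)"
proof (induction k)
  case 0 then show ?case using td_zero by simp
next
  case (Suc k)
  have "triangle_decomposable (\<lambda>e. m e + k * m e)"
    using td_add[OF assms Suc] by simp
  then show ?case by simp
qed

lemma step:
  assumes fin1: "finite E1" and fin2: "finite E2" and disj: "E1 \<inter> E2 = {}"
    and m1: "m1 \<in> Delta 0 V E1" and m2: "m2 \<in> Delta 0 V' E2"
    and g2: "graph_triangle_decomposable E2"
  shows "Delta 0 V'' (E1 \<union> E2) \<noteq> {}"
proof -
  obtain f1 where f1: "bij_betw f1 E1 {0..<card E1}" "\<forall>e. m1 e = (if e \<in> E1 then f1 e else 0)"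
    using m1 unfolding Delta_def Gamma_def by auto
  obtain f2 where f2: "bij_betw f2 E2 {0..<card E2}" "\<forall>e. m2 e = (if e \<in> E2 then f2 e else 0)"
    using m2 unfolding Delta_def Gamma_def by auto
  have d1: "triangle_decomposable m1" and d2: "triangle_decomposable m2"
    using m1 m2 unfolding Delta_def by auto
  define n1 where "n1 = card E1"
  define g where "g e = (if e \<in> E1 then f1 e else f2 e + n1)" for e
  define m where "m e = m1 e + (m2 e + n1 * (if e \<in> E2 then 1 else 0))" for e
  have "triangle_decomposable m"
    unfolding m_def
    by (intro td_add d1 d2 td_mult g2[unfolded graph_triangle_decomposable_def])
  moreover have "m \<in> Gamma 0 V'' (E1 \<union> E2)"
  proof -
    have b1: "bij_betw g E1 {0..<n1}"
      using f1(1) unfolding n1_def by (rule bij_betw_cong[THEN iffD1, rotated]) (auto simp: g_def)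
    have b2': "bij_betw ((\<lambda>x. x + n1) \<circ> f2) E2 {n1..<n1 + card E2}"
    proof (rule bij_betw_trans[OF f2(1)])
      show "bij_betw (\<lambda>x. x + n1) {0..<card E2} {n1..<n1 + card E2}"
        by (simp add: bij_betw_def add.commute)
    qed
    have b2: "bij_betw g E2 {n1..<n1 + card E2}"
      using b2' by (rule bij_betw_cong[THEN iffD1, rotated]) (use disj in \<open>auto simp: g_def\<close>)
    have "bij_betw g (E1 \<union> E2) ({0..<n1} \<union> {n1..<n1 + card E2})"
      by (rule bij_betw_combine[OF b1 b2]) auto
    moreover have "{0..<n1} \<union> {n1..<n1 + card E2} = {0..<card (E1 \<union> E2)}"
      using card_Un_disjoint[OF fin1 fin2 disj] unfolding n1_def by auto
    moreover have "\<forall>e. m e = (if e \<in> E1 \<union> E2 then g e else 0)"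
      using f1(2) f2(2) disj by (auto simp: m_def g_def)
    ultimately show ?thesis unfolding Gamma_def by auto
  qed
  ultimately show ?thesis unfolding Delta_def by auto
qed

lemma delta_empty: "Delta 0 V {} \<noteq> {}"
proof -
  have "(\<lambda>e. 0) \<in> Delta 0 V {}"
    unfolding Delta_def Gamma_def using td_zero by (auto simp: bij_betw_def)
  then show ?thesis by blast
qed

lemma gen:
  fixes b :: nat
  assumes "\<forall>i\<in>{1..b}. finite (EE i)"
    and "\<forall>i\<in>{1..b}. \<forall>j\<in>{1..b}. i \<noteq> j \<longrightarrow> EE i \<inter> EE j = {}"
    and "\<forall>i\<in>{1..b}. graph_triangle_decomposable (EE i)"
    and "\<forall>i\<in>{1..b}. Delta 0 (VV i) (EE i) \<noteq> {}"
  shows "Delta 0 V (\<Union>i\<in>{1..b}. EE i) \<noteq> {}"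
  using assms
proof (induction b)
  case 0 then show ?case using delta_empty by simp
next
  case (Suc b)
  have IH: "Delta 0 V (\<Union>i\<in>{1..b}. EE i) \<noteq> {}"
    using Suc.prems by (intro Suc.IH) auto
  then obtain m1 where m1: "m1 \<in> Delta 0 V (\<Union>i\<in>{1..b}. EE i)" by blast
  obtain m2 where m2: "m2 \<in> Delta 0 (VV (Suc b)) (EE (Suc b))" using Suc.prems(4) by fastforce
  have u: "(\<Union>i\<in>{1..Suc b}. EE i) = (\<Union>i\<in>{1..b}. EE i) \<union> EE (Suc b)"
    by (auto simp: atLeastAtMostSuc_conv)
  have disj: "(\<Union>i\<in>{1..b}. EE i) \<inter> EE (Suc b) = {}"
  proof (rule ccontr)
    assume "\<not> ?thesis"
    then obtain i x where "i \<in> {1..b}" "x \<in> EE i" "x \<in> EE (Suc b)" by blast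
    moreover have "i \<in> {1..Suc b}" "Suc b \<in> {1..Suc b}" "i \<noteq> Suc b" using \<open>i \<in> {1..b}\<close> by auto
    ultimately show False using Suc.prems(2) by blast
  qed
  show ?case unfolding u
    by (rule step[OF _ _ disj m1 m2]) (use Suc.prems in auto)
qed

theorem mainTheorem3:
  fixes V :: "'a set" and E :: "'a set set"
    and VV :: "nat \<Rightarrow> 'a set" and EE :: "nat \<Rightarrow> 'a set set" and b :: nat
  assumes "simple_graph V E"
    and "\<forall>i\<in>{1..b}. subgraph (VV i) (EE i) V E"
    and "\<forall>i\<in>{1..b}. \<forall>j\<in>{1..b}. i \<noteq> j \<longrightarrow> EE i \<inter> EE j = {}"
    and "(\<Union>i\<in>{1..b}. EE i) = E"
    and "\<forall>i\<in>{1..b}. graph_triangle_decomposable (EE i)"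
    and "\<forall>i\<in>{1..b}. Delta 0 (VV i) (EE i) \<noteq> {}"
  shows "Delta 0 V E \<noteq> {}"
proof -
  have "finite E"
  proof (rule finite_subset[of E "Pow V"])
    show "E \<subseteq> Pow V" using assms(1) unfolding simple_graph_def by auto
    show "finite (Pow V)" using assms(1) unfolding simple_graph_def by auto
  qed
  then have "\<forall>i\<in>{1..b}. finite (EE i)"
    using assms(4) by (metis UN_upper finite_subset)
  then show ?thesis using gen[OF _ assms(3,5,6)] assms(4) by metis
qed

end
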